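(* Let $A\subseteq\omega$ be a c.e. set which has a density and let $\epsilon$ be a positive real number. Then $A$ has a computable subset $B$ such that $D(A,B)<\epsilon$.
   Context: For $S\subseteq\omega$ and $n>0$, $\rho_n(S)=|S\cap[0,n)|/n$; the upper density is $\overline{\rho}(S)=\limsup_n\rho_n(S)$ and the density is $\rho(S)=\lim_n\rho_n(S)$ when the limit exists. For $A,B\subseteq\omega$, $D(A,B)=\overline{\rho}(A\triangle B)$, the upper density of the symmetric difference. *)

theory Defs
  imports "HOL-Analysis.Analysis"
begin

datatype recf =
    Zr
  | Sc
  | Id nat
  | Cn recf "recf list"
  | Pr recf recf
  | Mn recf

inductive eval :: "recf \<Rightarrow> nat list \<Rightarrow> nat \<Rightarrow> bool" where
  eval_Z: "eval Zr xs 0"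
| eval_S: "eval Sc (x # xs) (Suc x)"
| eval_Id: "i < length xs \<Longrightarrow> eval (Id i) xs (xs ! i)"
| eval_Cn: "length ys = length gs \<Longrightarrow> (\<forall>i<length gs. eval (gs ! i) xs (ys ! i))
             \<Longrightarrow> eval f ys y \<Longrightarrow> eval (Cn f gs) xs y"
| eval_Pr0: "eval f xs y \<Longrightarrow> eval (Pr f g) (0 # xs) y"
| eval_PrS: "eval (Pr f g) (n # xs) z \<Longrightarrow> eval g (z # n # xs) y
             \<Longrightarrow> eval (Pr f g) (Suc n # xs) y"
| eval_Mn: "eval f (n # xs) 0 \<Longrightarrow> (\<forall>m<n. \<exists>k. eval f (m # xs) (Suc k))
             \<Longrightarrow> eval (Mn f) xs n"

definition computable_set :: "nat set \<Rightarrow> bool" where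
  "computable_set B \<longleftrightarrow> (\<exists>f. \<forall>x. eval f [x] (if x \<in> B then 1 else 0))"

definition ce_set :: "nat set \<Rightarrow> bool" where
  "ce_set A \<longleftrightarrow> (\<exists>f. \<forall>x. x \<in> A \<longleftrightarrow> (\<exists>y. eval f [x] y))"

definition rho_n :: "nat set \<Rightarrow> nat \<Rightarrow> real" where
  "rho_n X n = real (card (X \<inter> {0..<n})) / real n"

definition upper_density :: "nat set \<Rightarrow> ereal" where
  "upper_density X = limsup (\<lambda>n. ereal (rho_n X (Suc n)))"

definition has_density :: "nat set \<Rightarrow> bool" where
  "has_density X \<longleftrightarrow> convergent (\<lambda>n. rho_n X (Suc n))"

definition D :: "nat set \<Rightarrow> nat set \<Rightarrow> ereal" where
  "D A B = upper_density ((A - B) \<union> (B - A))"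

end

theory Submission
  imports Defs
begin


definition prsem :: "(nat list \<Rightarrow> nat option) \<Rightarrow> (nat list \<Rightarrow> nat option) \<Rightarrow> nat \<Rightarrow> nat list \<Rightarrow> nat option" where
  "prsem F G n ys = rec_nat (F ys) (\<lambda>m r. case r of None \<Rightarrow> None | Some z \<Rightarrow> G (z#m#ys)) n"

definition mnT :: "nat \<Rightarrow> (nat list \<Rightarrow> nat option) \<Rightarrow> nat list \<Rightarrow> nat" where
  "mnT s F xs = (LEAST m. s \<le> m \<or> (case F (m#xs) of Some (Suc _) \<Rightarrow> False | _ \<Rightarrow> True))"

definition mnsem :: "nat \<Rightarrow> (nat list \<Rightarrow> nat option) \<Rightarrow> nat list \<Rightarrow> nat option" where
  "mnsem s F xs = (if mnT s F xs < s \<and> F (mnT s F xs # xs) = Some 0 then Some (mnT s F xs) else None)"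

fun bev :: "nat \<Rightarrow> recf \<Rightarrow> nat list \<Rightarrow> nat option" where
  "bev s Zr xs = Some 0"
| "bev s Sc xs = (case xs of [] \<Rightarrow> None | x#_ \<Rightarrow> Some (Suc x))"
| "bev s (Id i) xs = (if i < length xs then Some (xs!i) else None)"
| "bev s (Cn f gs) xs = (if (\<exists>g\<in>set gs. bev s g xs = None) then None
      else bev s f (map (\<lambda>g. the (bev s g xs)) gs))"
| "bev s (Pr f g) xs = (case xs of [] \<Rightarrow> None | n#ys \<Rightarrow> prsem (bev s f) (bev s g) n ys)"
| "bev s (Mn f) xs = mnsem s (bev s f) xs"



lemma prsem_0[simp]: "prsem F G 0 ys = F ys" by (simp add: prsem_def)
lemma prsem_Suc[simp]: "prsem F G (Suc n) ys = (case prsem F G n ys of None \<Rightarrow> None | Some z \<Rightarrow> G (z#n#ys))"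
  by (simp add: prsem_def)

lemma mnT_prop: "s \<le> mnT s F xs \<or> (case F (mnT s F xs#xs) of Some (Suc _) \<Rightarrow> False | _ \<Rightarrow> True)"
  unfolding mnT_def by (rule LeastI[of _ s]) simp

lemma mnT_less: "m < mnT s F xs \<Longrightarrow> m < s \<and> (\<exists>k. F (m#xs) = Some (Suc k))"
proof -
  assume m: "m < mnT s F xs"
  have "\<not> (s \<le> m \<or> (case F (m#xs) of Some (Suc _) \<Rightarrow> False | _ \<Rightarrow> True))"
    using not_less_Least[OF m[unfolded mnT_def]] .
  then show ?thesis by (auto split: option.splits nat.splits)
qed

lemma mnT_le: "s \<le> m \<or> (case F (m#xs) of Some (Suc _) \<Rightarrow> False | _ \<Rightarrow> True) \<Longrightarrow> mnT s F xs \<le> m"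
  unfolding mnT_def by (rule Least_le)

lemma bev_sound: "bev s f xs = Some y \<Longrightarrow> eval f xs y"
proof (induction f arbitrary: xs y)
  case Zr then show ?case by (auto intro: eval.intros)
next
  case Sc then show ?case by (auto intro: eval.intros split: list.splits)
next
  case (Id i) then show ?case by (auto intro: eval.intros split: if_splits)
next
  case (Cn f gs)
  let ?ys = "map (\<lambda>g. the (bev s g xs)) gs"
  have all: "\<forall>g\<in>set gs. bev s g xs \<noteq> None" and fy: "bev s f ?ys = Some y"
    using Cn.prems by (auto split: if_splits)
  show ?case
  proof (rule eval_Cn[of ?ys])
    show "\<forall>i<length gs. eval (gs ! i) xs (?ys ! i)"
    proof (intro allI impI)
      fix i assume i: "i < length gs"
      then have gi: "gs ! i \<in> set gs" by simp
      then obtain z where "bev s (gs!i) xs = Some z" using all by auto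
      then show "eval (gs ! i) xs (?ys ! i)" using Cn.IH(2)[OF gi] i by simp
    qed
  qed (use Cn.IH(1) fy in auto)
next
  case (Pr f g)
  then obtain n ys where xs: "xs = n#ys" by (cases xs) auto
  have "prsem (bev s f) (bev s g) n ys = Some y \<Longrightarrow> eval (Pr f g) (n#ys) y" for y
  proof (induction n arbitrary: y)
    case 0 then show ?case using Pr.IH(1) by (auto intro: eval.intros)
  next
    case (Suc n)
    then obtain z where z: "prsem (bev s f) (bev s g) n ys = Some z" and gz: "bev s g (z#n#ys) = Some y"
      by (auto split: option.splits)
    show ?case by (rule eval_PrS[OF Suc.IH[OF z] Pr.IH(2)[OF gz]])
  qed
  then show ?case using Pr.prems xs by simp
next
  case (Mn f)
  let ?T = "mnT s (bev s f) xs"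
  have T: "?T < s" "bev s f (?T#xs) = Some 0" and y: "y = ?T"
    using Mn.prems by (auto simp: mnsem_def split: if_splits)
  show ?case unfolding y
  proof (rule eval_Mn)
    show "eval f (?T # xs) 0" using Mn.IH T by simp
    show "\<forall>m<?T. \<exists>k. eval f (m # xs) (Suc k)"
      using mnT_less Mn.IH by blast
  qed
qed

lemma bev_mono: "bev s f xs = Some y \<Longrightarrow> s \<le> t \<Longrightarrow> bev t f xs = Some y"
proof (induction f arbitrary: xs y)
  case (Cn f gs)
  have all: "\<forall>g\<in>set gs. bev s g xs \<noteq> None" and fy: "bev s f (map (\<lambda>g. the (bev s g xs)) gs) = Some y"
    using Cn.prems by (auto split: if_splits)
  have eq: "\<forall>g\<in>set gs. bev t g xs = bev s g xs"
    using all Cn.IH(2) Cn.prems(2) by fastforce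
  then have mq: "map (\<lambda>g. the (bev t g xs)) gs = map (\<lambda>g. the (bev s g xs)) gs" by simp
  have nn: "\<not> (\<exists>g\<in>set gs. bev t g xs = None)" using all eq by simp
  show ?case using nn Cn.IH(1)[OF fy Cn.prems(2)] by (simp only: bev.simps mq if_False)
next
  case (Pr f g)
  then obtain n ys where xs: "xs = n#ys" by (cases xs) auto
  have "prsem (bev s f) (bev s g) n ys = Some y \<Longrightarrow> prsem (bev t f) (bev t g) n ys = Some y" for y
  proof (induction n arbitrary: y)
    case 0 then show ?case using Pr.IH(1) Pr.prems(2) by auto
  next
    case (Suc n)
    then obtain z where z: "prsem (bev s f) (bev s g) n ys = Some z" and gz: "bev s g (z#n#ys) = Some y"
      by (auto split: option.splits)
    show ?case using Suc.IH[OF z] Pr.IH(2)[OF gz Pr.prems(2)] by simp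
  qed
  then show ?case using Pr.prems xs by simp
next
  case (Mn f)
  let ?T = "mnT s (bev s f) xs"
  have T: "?T < s" "bev s f (?T#xs) = Some 0" and y: "y = ?T"
    using Mn.prems by (auto simp: mnsem_def split: if_splits)
  have T0: "bev t f (?T#xs) = Some 0" using Mn.IH T Mn.prems(2) by blast
  have le: "mnT t (bev t f) xs \<le> ?T" by (rule mnT_le) (simp add: T0)
  have ge: "?T \<le> mnT t (bev t f) xs"
  proof (rule ccontr)
    assume "\<not> ?T \<le> mnT t (bev t f) xs"
    then have lt: "mnT t (bev t f) xs < ?T" by simp
    then obtain k where "bev s f (mnT t (bev t f) xs # xs) = Some (Suc k)"
      using mnT_less by blast
    then have "bev t f (mnT t (bev t f) xs # xs) = Some (Suc k)" using Mn.IH Mn.prems(2) by blast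
    moreover have "mnT t (bev t f) xs < t" using lt T Mn.prems(2) by simp
    ultimately show False using mnT_prop[of t "bev t f" xs] by simp
  qed
  have "mnT t (bev t f) xs = ?T" using le ge by simp
  then show ?case using T T0 y Mn.prems(2) by (simp add: mnsem_def)
qed auto

lemma bev_complete: "eval f xs y \<Longrightarrow> \<exists>s. bev s f xs = Some y"
proof (induction rule: eval.induct)
  case (eval_Cn ys gs xs f y)
  have "\<forall>i<length gs. \<exists>s. bev s (gs!i) xs = Some (ys!i)" using eval_Cn.IH(1) by blast
  then obtain S where S: "\<forall>i<length gs. bev (S i) (gs!i) xs = Some (ys!i)" by metis
  obtain s0 where s0: "bev s0 f ys = Some y" using eval_Cn.IH(2) by blast
  define s where "s = max s0 (Max (S ` {..<length gs}))"
  have gi: "\<forall>i<length gs. bev s (gs!i) xs = Some (ys!i)"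
  proof (intro allI impI)
    fix i assume i: "i < length gs"
    have "S i \<le> Max (S ` {..<length gs})" by (rule Max_ge) (use i in auto)
    then have "S i \<le> s" unfolding s_def by simp
    then show "bev s (gs!i) xs = Some (ys!i)" using bev_mono S i by blast
  qed
  have nn: "\<not> (\<exists>g\<in>set gs. bev s g xs = None)" using gi by (auto simp: in_set_conv_nth)
  have "map (\<lambda>g. the (bev s g xs)) gs = ys"
    by (rule nth_equalityI) (use gi eval_Cn.hyps(1) in auto)
  moreover have "bev s f ys = Some y" using bev_mono[OF s0] s_def by simp
  ultimately show ?case using nn by (intro exI[of _ s]) simp
next
  case (eval_Pr0 f xs y g)
  then obtain s where "bev s f xs = Some y" by blast
  then show ?case by (intro exI[of _ s]) simp
next
  case (eval_PrS f g n xs z y)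
  obtain s1 where s1: "bev s1 (Pr f g) (n#xs) = Some z" using eval_PrS.IH(1) by blast
  obtain s2 where s2: "bev s2 g (z#n#xs) = Some y" using eval_PrS.IH(2) by blast
  have a: "bev (max s1 s2) (Pr f g) (n#xs) = Some z" using bev_mono[OF s1] by simp
  have b: "bev (max s1 s2) g (z#n#xs) = Some y" using bev_mono[OF s2] by simp
  show ?case using a b by (intro exI[of _ "max s1 s2"]) simp
next
  case (eval_Mn f n xs)
  obtain s0 where s0: "bev s0 f (n#xs) = Some 0" using eval_Mn.IH(1) by blast
  have "\<forall>m<n. \<exists>s k. bev s f (m#xs) = Some (Suc k)" using eval_Mn.IH(2) by blast
  then obtain S K where SK: "\<forall>m<n. bev (S m) f (m#xs) = Some (Suc (K m))" by metis
  define s where "s = max (Suc n) (max s0 (Max (S ` {..<n})))"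
  have m: "\<forall>m<n. bev s f (m#xs) = Some (Suc (K m))"
  proof (intro allI impI)
    fix m assume m: "m < n"
    have "S m \<le> Max (S ` {..<n})" by (rule Max_ge) (use m in auto)
    then have "S m \<le> s" unfolding s_def by simp
    then show "bev s f (m#xs) = Some (Suc (K m))" using bev_mono SK m by blast
  qed
  have z: "bev s f (n#xs) = Some 0" using bev_mono[OF s0] s_def by simp
  have le: "mnT s (bev s f) xs \<le> n" by (rule mnT_le) (simp add: z)
  have ge: "n \<le> mnT s (bev s f) xs"
  proof (rule ccontr)
    assume "\<not> n \<le> mnT s (bev s f) xs"
    then have lt: "mnT s (bev s f) xs < n" by simp
    moreover have "Suc n \<le> s" unfolding s_def by simp
    then have "mnT s (bev s f) xs < s" using lt by simp
    ultimately show False using mnT_prop[of s "bev s f" xs] m by auto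
  qed
  have "mnT s (bev s f) xs = n" using le ge by simp
  then show ?case using z s_def by (intro exI[of _ s]) (simp add: mnsem_def)
qed auto



definition recfn :: "nat \<Rightarrow> (nat list \<Rightarrow> nat) \<Rightarrow> bool" where
  "recfn k g \<longleftrightarrow> (\<exists>f. \<forall>xs. length xs = k \<longrightarrow> eval f xs (g xs))"

lemma rf_cong: "recfn k g \<Longrightarrow> (\<And>xs. length xs = k \<Longrightarrow> g xs = h xs) \<Longrightarrow> recfn k h"
  unfolding recfn_def by metis

lemma rf_const: "recfn k (\<lambda>_. c)"
proof (induction c)
  case 0 show ?case unfolding recfn_def by (auto intro!: exI[of _ Zr] eval.intros)
next
  case (Suc c)
  then obtain f where f: "\<forall>xs. length xs = k \<longrightarrow> eval f xs c" unfolding recfn_def by blast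
  show ?case unfolding recfn_def
    by (rule exI[of _ "Cn Sc [f]"]) (auto intro!: eval_Cn[of "[c]"] eval.intros f[rule_format])
qed

lemma rf_proj: "i < k \<Longrightarrow> recfn k (\<lambda>xs. xs!i)"
  unfolding recfn_def by (auto intro!: exI[of _ "Id i"] eval.intros)

lemma rf_compL:
  assumes h: "recfn (length gs) h" and gs: "\<forall>g\<in>set gs. recfn k g"
  shows "recfn k (\<lambda>xs. h (map (\<lambda>g. g xs) gs))"
proof -
  obtain fh where fh: "\<forall>ys. length ys = length gs \<longrightarrow> eval fh ys (h ys)" using h unfolding recfn_def by blast
  have "\<forall>g\<in>set gs. \<exists>f. \<forall>xs. length xs = k \<longrightarrow> eval f xs (g xs)" using gs unfolding recfn_def by blast
  then obtain F where F: "\<forall>g\<in>set gs. \<forall>xs. length xs = k \<longrightarrow> eval (F g) xs (g xs)" by metis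
  show ?thesis unfolding recfn_def
  proof (intro exI[of _ "Cn fh (map F gs)"] allI impI)
    fix xs :: "nat list" assume xs: "length xs = k"
    show "eval (Cn fh (map F gs)) xs (h (map (\<lambda>g. g xs) gs))"
      by (rule eval_Cn[of "map (\<lambda>g. g xs) gs"]) (use F fh xs in auto)
  qed
qed

lemma rf_comp1: "recfn 1 h \<Longrightarrow> recfn k g \<Longrightarrow> recfn k (\<lambda>xs. h [g xs])"
  using rf_compL[of "[g]" h k] by simp
lemma rf_comp2: "recfn 2 h \<Longrightarrow> recfn k g1 \<Longrightarrow> recfn k g2 \<Longrightarrow> recfn k (\<lambda>xs. h [g1 xs, g2 xs])"
  using rf_compL[of "[g1,g2]" h k] by (simp add: numeral_2_eq_2)

lemma rf_suc0: "recfn 1 (\<lambda>xs. Suc (xs!0))"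
  unfolding recfn_def
  by (rule exI[of _ Sc]) (auto simp: length_Suc_conv intro: eval.intros)

lemma rf_prim:
  assumes g0: "recfn k g0" and h: "recfn (Suc (Suc k)) h"
  shows "recfn (Suc k) (\<lambda>xs. rec_nat (g0 (tl xs)) (\<lambda>m r. h (r#m#tl xs)) (hd xs))"
proof -
  obtain F where F: "\<forall>xs. length xs = k \<longrightarrow> eval F xs (g0 xs)" using g0 unfolding recfn_def by blast
  obtain H where H: "\<forall>xs. length xs = Suc (Suc k) \<longrightarrow> eval H xs (h xs)" using h unfolding recfn_def by blast
  have *: "length ys = k \<Longrightarrow> eval (Pr F H) (n#ys) (rec_nat (g0 ys) (\<lambda>m r. h (r#m#ys)) n)" for n ys
  proof (induction n)
    case 0 then show ?case using F by (auto intro: eval.intros)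
  next
    case (Suc n) then show ?case using H by (auto intro: eval.intros)
  qed
  show ?thesis unfolding recfn_def
  proof (intro exI[of _ "Pr F H"] allI impI)
    fix xs :: "nat list" assume "length xs = Suc k"
    then obtain n ys where "xs = n#ys" "length ys = k" by (cases xs) auto
    then show "eval (Pr F H) xs (rec_nat (g0 (tl xs)) (\<lambda>m r. h (r#m#tl xs)) (hd xs))" using * by simp
  qed
qed

lemma rf_mn:
  assumes g: "recfn (Suc k) g" and ex: "\<And>xs. length xs = k \<Longrightarrow> \<exists>n. g (n#xs) = 0"
  shows "recfn k (\<lambda>xs. LEAST n. g (n#xs) = 0)"
proof -
  obtain G where G: "\<forall>xs. length xs = Suc k \<longrightarrow> eval G xs (g xs)" using g unfolding recfn_def by blast
  show ?thesis unfolding recfn_def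
  proof (intro exI[of _ "Mn G"] allI impI)
    fix xs :: "nat list" assume xs: "length xs = k"
    let ?n = "LEAST n. g (n#xs) = 0"
    have z: "g (?n#xs) = 0" using ex[OF xs] by (rule LeastI_ex)
    have "\<forall>m<?n. \<exists>j. eval G (m#xs) (Suc j)"
    proof (intro allI impI)
      fix m assume "m < ?n"
      then have "g (m#xs) \<noteq> 0" using not_less_Least by blast
      then obtain j where "g (m#xs) = Suc j" by (cases "g (m#xs)") auto
      then show "\<exists>j. eval G (m#xs) (Suc j)" using G xs by (metis length_Cons)
    qed
    moreover have "eval G (?n#xs) 0" using G[rule_format, of "?n#xs"] xs z by simp
    ultimately show "eval (Mn G) xs ?n" by (auto intro!: eval_Mn)
  qed
qed

lemma recnat_add: "rec_nat b (\<lambda>m r. Suc r) a = a + b" by (induct a) auto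
lemma recnat_mult: "rec_nat 0 (\<lambda>m r. r + b) a = a * b" by (induct a) auto
lemma recnat_pred: "rec_nat 0 (\<lambda>m r. m) a = a - 1" by (induct a) auto
lemma recnat_minus: "rec_nat b (\<lambda>m r. r - Suc 0) a = b - a" by (induct a) auto

lemma l2: "length xs = 2 \<longleftrightarrow> (\<exists>a b. xs = [a,b])"
  by (auto simp: length_Suc_conv numeral_2_eq_2)

lemma rf_suc: "recfn k f \<Longrightarrow> recfn k (\<lambda>xs. Suc (f xs))"
  using rf_comp1[OF rf_suc0] by simp

lemma rf_add0: "recfn 2 (\<lambda>xs. xs!0 + xs!1)"
proof -
  have a: "recfn 1 (\<lambda>xs. xs!0)" by (rule rf_proj) simp
  have b: "recfn (Suc (Suc 1)) (\<lambda>xs. Suc (xs!0))" by (rule rf_suc, rule rf_proj) simp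
  have "recfn (Suc 1) (\<lambda>xs. xs!0 + xs!1)"
    by (rule rf_cong[OF rf_prim[OF a b]]) (auto simp: l2[unfolded numeral_2_eq_2] recnat_add)
  then show ?thesis by (simp add: numeral_2_eq_2)
qed

lemma rf_add: "recfn k f \<Longrightarrow> recfn k g \<Longrightarrow> recfn k (\<lambda>xs. f xs + g xs)"
  using rf_comp2[OF rf_add0] by simp

lemma rf_mult0: "recfn 2 (\<lambda>xs. xs!0 * xs!1)"
proof -
  have a: "recfn 1 (\<lambda>xs. 0)" by (rule rf_const)
  have b: "recfn (Suc (Suc 1)) (\<lambda>xs. xs!0 + xs!2)" by (intro rf_add rf_proj) auto
  have "recfn (Suc 1) (\<lambda>xs. xs!0 * xs!1)"
    by (rule rf_cong[OF rf_prim[OF a b]]) (auto simp: l2[unfolded numeral_2_eq_2] recnat_mult)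
  then show ?thesis by (simp add: numeral_2_eq_2)
qed

lemma rf_mult: "recfn k f \<Longrightarrow> recfn k g \<Longrightarrow> recfn k (\<lambda>xs. f xs * g xs)"
  using rf_comp2[OF rf_mult0] by simp

lemma rf_pred0: "recfn 1 (\<lambda>xs. xs!0 - 1)"
proof -
  have a: "recfn 0 (\<lambda>xs. 0)" by (rule rf_const)
  have b: "recfn (Suc (Suc 0)) (\<lambda>xs. xs!1)" by (rule rf_proj) simp
  have "recfn (Suc 0) (\<lambda>xs. xs!0 - 1)"
    by (rule rf_cong[OF rf_prim[OF a b]]) (auto simp: length_Suc_conv recnat_pred)
  then show ?thesis by simp
qed

lemma rf_minusr: "recfn 2 (\<lambda>xs. xs!1 - xs!0)"
proof -
  have a: "recfn 1 (\<lambda>xs. xs!0)" by (rule rf_proj) simp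
  have b: "recfn (Suc (Suc 1)) (\<lambda>xs. xs!0 - 1)" by (rule rf_comp1[OF rf_pred0, THEN rf_cong], rule rf_proj) auto
  have "recfn (Suc 1) (\<lambda>xs. xs!1 - xs!0)"
    by (rule rf_cong[OF rf_prim[OF a b]]) (auto simp: l2[unfolded numeral_2_eq_2] recnat_minus)
  then show ?thesis by (simp add: numeral_2_eq_2)
qed

lemma rf_minus0: "recfn 2 (\<lambda>xs. xs!0 - xs!1)"
proof -
  have "recfn 2 (\<lambda>xs. [xs!1, xs!0]!1 - [xs!1, xs!0]!0)"
    by (rule rf_comp2[OF rf_minusr]; rule rf_proj; simp)
  then show ?thesis by simp
qed

lemma rf_minus: "recfn k f \<Longrightarrow> recfn k g \<Longrightarrow> recfn k (\<lambda>xs. f xs - g xs)"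
  using rf_comp2[OF rf_minus0] by simp



definition code :: "nat option \<Rightarrow> nat" where "code r = (case r of None \<Rightarrow> 0 | Some y \<Rightarrow> Suc y)"

lemma code_simps[simp]: "code None = 0" "code (Some y) = Suc y" by (auto simp: code_def)

lemma rf_compL':
  "recfn (length gs) h \<Longrightarrow> (\<forall>g\<in>set gs. recfn k g) \<Longrightarrow> (\<And>xs. length xs = k \<Longrightarrow> H xs = h (map (\<lambda>g. g xs) gs)) \<Longrightarrow> recfn k H"
  by (rule rf_cong[OF rf_compL]) auto

lemma rf_projs: "\<forall>g\<in>set (map (\<lambda>i xs. xs!i) [a..<k]). recfn k g"
  by (auto intro: rf_proj)

lemma map_drop: "length xs = k \<Longrightarrow> map (\<lambda>g. g xs) (map (\<lambda>i xs. xs!i) [a..<k]) = drop a xs"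
  by (rule nth_equalityI) auto

lemma rf_prodlist: "(\<forall>g\<in>set gs. recfn k (G g)) \<Longrightarrow> recfn k (\<lambda>xs. prod_list (map (\<lambda>g. G g xs) gs))"
proof (induction gs)
  case Nil then show ?case using rf_const[of k 1] by simp
next
  case (Cons g gs) then show ?case by (simp add: rf_mult)
qed

lemma code_prsem:
  "code (prsem F G n ys) = rec_nat (code (F ys)) (\<lambda>m r. (1 - (1 - r)) * code (G ((r - 1) # m # ys))) n"
proof (induction n)
  case (Suc n) show ?case
    by (simp only: prsem_Suc old.nat.rec(2) flip: Suc.IH) (cases "prsem F G n ys"; simp)
qed simp

lemma rf_bev: "recfn (Suc k) (\<lambda>xs. code (bev (hd xs) f (tl xs)))"
proof (induction f arbitrary: k)
  case Zr
  show ?case by (rule rf_cong[OF rf_const[of _ 1]]) simp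
next
  case Sc
  show ?case
  proof (cases k)
    case 0
    show ?thesis by (rule rf_cong[OF rf_const[of _ 0]]) (auto simp: 0 length_Suc_conv)
  next
    case (Suc j)
    have "recfn (Suc k) (\<lambda>xs. Suc (Suc (xs!1)))" by (intro rf_suc rf_proj) (simp add: Suc)
    then show ?thesis by (rule rf_cong) (auto simp: Suc length_Suc_conv)
  qed
next
  case (Id i)
  show ?case
  proof (cases "i < k")
    case True note ik = this
    have "recfn (Suc k) (\<lambda>xs. Suc (xs!(Suc i)))" by (intro rf_suc rf_proj) (simp add: ik)
    then show ?thesis by (rule rf_cong) (use ik in \<open>auto simp: length_Suc_conv\<close>)
  next
    case False
    note nik = False
    show ?thesis by (rule rf_cong[OF rf_const[of _ 0]]) (use nik in \<open>auto simp: length_Suc_conv\<close>)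
  qed
next
  case (Cn f gs)
  let ?G = "\<lambda>g xs. code (bev (hd xs) g (tl xs))"
  let ?F = "\<lambda>xs. code (bev (hd xs) f (tl xs))"
  have G: "\<forall>g\<in>set gs. recfn (Suc k) (?G g)" using Cn.IH(2) by blast
  have F: "recfn (Suc (length gs)) ?F" using Cn.IH(1) by blast
  define L where "L = (\<lambda>xs. xs!0) # map (\<lambda>g xs. ?G g xs - 1) gs"
  have L: "\<forall>h\<in>set L. recfn (Suc k) h" unfolding L_def using G
    by (auto intro: rf_proj rf_minus rf_const)
  have F2: "recfn (Suc k) (\<lambda>xs. ?F (map (\<lambda>h. h xs) L))"
    by (rule rf_compL) (use F L in \<open>auto simp: L_def\<close>)
  have P: "recfn (Suc k) (\<lambda>xs. 1 - (1 - prod_list (map (\<lambda>g. ?G g xs) gs)))"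
    by (intro rf_minus rf_const) (rule rf_prodlist[OF G])
  have "recfn (Suc k) (\<lambda>xs. (1 - (1 - prod_list (map (\<lambda>g. ?G g xs) gs))) * ?F (map (\<lambda>h. h xs) L))"
    by (rule rf_mult[OF P F2])
  then show ?case
  proof (rule rf_cong)
    fix xs :: "nat list" assume "length xs = Suc k"
    then obtain s ys where xs: "xs = s#ys" by (cases xs) auto
    show "(1 - (1 - prod_list (map (\<lambda>g. ?G g xs) gs))) * ?F (map (\<lambda>h. h xs) L) = code (bev (hd xs) (Cn f gs) (tl xs))"
    proof (cases "\<exists>g\<in>set gs. bev s g ys = None")
      case True
      then have "prod_list (map (\<lambda>g. ?G g xs) gs) = 0" using xs by (force simp: prod_list_zero_iff)
      then show ?thesis using True xs by simp
    next
      case False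
      then have "prod_list (map (\<lambda>g. ?G g xs) gs) \<noteq> 0" using xs
        by (auto simp: prod_list_zero_iff)
      moreover have "map (\<lambda>h. h xs) L = s # map (\<lambda>g. the (bev s g ys)) gs"
        using False xs by (auto simp: L_def)
      ultimately show ?thesis using False xs by auto
    qed
  qed
next
  case (Pr f g)
  show ?case
  proof (cases k)
    case 0
    show ?thesis by (rule rf_cong[OF rf_const[of _ 0]]) (auto simp: 0 length_Suc_conv)
  next
    case (Suc j)
    let ?F = "\<lambda>xs. code (bev (hd xs) f (tl xs))"
    let ?G = "\<lambda>xs. code (bev (hd xs) g (tl xs))"
    have F: "recfn (Suc j) ?F" using Pr.IH(1) by blast
    have G: "recfn (Suc (Suc (Suc j))) ?G" using Pr.IH(2) by blast
    define hL where "hL = [(\<lambda>w::nat list. w!2), (\<lambda>w. w!0 - 1), (\<lambda>w. w!1)] @ map (\<lambda>i w. w!i) [3..<Suc (Suc (Suc j))]"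
    have hL: "\<forall>h\<in>set hL. recfn (Suc (Suc (Suc j))) h" unfolding hL_def
      by (auto intro!: rf_proj rf_minus rf_const)
    have lhL: "length hL = Suc (Suc (Suc j))" by (simp add: hL_def del: upt_Suc)
    have G2: "recfn (Suc (Suc (Suc j))) (\<lambda>w. ?G (map (\<lambda>h. h w) hL))"
      using rf_compL[of hL ?G "Suc (Suc (Suc j))"] G hL lhL by simp
    have h: "recfn (Suc (Suc (Suc j))) (\<lambda>w. (1 - (1 - w!0)) * ?G (map (\<lambda>h. h w) hL))"
      by (intro rf_mult rf_minus rf_const rf_proj G2) auto
    have H: "recfn (Suc (Suc j)) (\<lambda>xs. rec_nat (?F (tl xs)) (\<lambda>m r. (1 - (1 - (r#m#tl xs)!0)) * ?G (map (\<lambda>h. h (r#m#tl xs)) hL)) (hd xs))"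
      by (rule rf_prim[OF F h])
    define PL where "PL = [(\<lambda>w::nat list. w!1), (\<lambda>w. w!0)] @ map (\<lambda>i w. w!i) [2..<Suc (Suc j)]"
    have PL: "\<forall>h\<in>set PL. recfn (Suc (Suc j)) h" unfolding PL_def by (auto intro!: rf_proj)
    define Hf where "Hf = (\<lambda>xs. rec_nat (?F (tl xs)) (\<lambda>m r. (1 - (1 - (r#m#tl xs)!0)) * ?G (map (\<lambda>h. h (r#m#tl xs)) hL)) (hd xs))"
    have lPL: "length PL = Suc (Suc j)" by (simp add: PL_def del: upt_Suc)
    have H': "recfn (length PL) Hf" using H lPL unfolding Hf_def by simp
    have "recfn (Suc (Suc j)) (\<lambda>xs. Hf (map (\<lambda>h. h xs) PL))"
      by (rule rf_compL[OF H' PL])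
    then show ?thesis unfolding Suc
    proof (rule rf_cong)
      fix xs :: "nat list" assume "length xs = Suc (Suc j)"
      then obtain s n ys where xs: "xs = s#n#ys" and ys: "length ys = j" by (auto simp: length_Suc_conv)
      have d: "map (\<lambda>g. g xs) (map (\<lambda>i xs. xs!i) [2..<Suc (Suc j)]) = drop 2 xs" by (rule map_drop) (simp add: xs ys)
      have 1: "map (\<lambda>h. h xs) PL = n # s # ys"
        unfolding PL_def map_append list.map(1,2) d by (simp add: xs)
      have 2: "map (\<lambda>h. h (r#m#s#ys)) hL = s # (r - 1) # m # ys" for r m using ys
        by (simp add: hL_def map_drop[of "r#m#s#ys" "Suc (Suc (Suc j))" 3, simplified])
      show "Hf (map (\<lambda>h. h xs) PL) = code (bev (hd xs) (Pr f g) (tl xs))"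
        unfolding 1 using xs by (simp add: Hf_def 2 code_prsem)
    qed
  qed
next
  case (Mn f)
  let ?F = "\<lambda>xs. code (bev (hd xs) f (tl xs))"
  have F: "recfn (Suc (Suc k)) ?F" using Mn.IH by blast
  define AL where "AL = [(\<lambda>w::nat list. w!1), (\<lambda>w. w!0)] @ map (\<lambda>i w. w!i) [2..<Suc (Suc k)]"
  have AL: "\<forall>h\<in>set AL. recfn (Suc (Suc k)) h" unfolding AL_def by (auto intro!: rf_proj)
  have F2: "recfn (Suc (Suc k)) (\<lambda>w. ?F (map (\<lambda>h. h w) AL))"
    using rf_compL[of AL ?F "Suc (Suc k)", OF _ AL] F by (simp add: AL_def del: upt_Suc)
  have g: "recfn (Suc (Suc k)) (\<lambda>w. (w!1 - w!0) * (?F (map (\<lambda>h. h w) AL) - 1))"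
    by (intro rf_mult rf_minus rf_proj rf_const F2) auto
  have T: "recfn (Suc k) (\<lambda>xs. LEAST m. ((m#xs)!1 - (m#xs)!0) * (?F (map (\<lambda>h. h (m#xs)) AL) - 1) = 0)"
    by (rule rf_mn[OF g]) (auto intro: exI[of _ "hd _"])
  define Tf where "Tf = (\<lambda>xs. LEAST m. ((m#xs)!1 - (m#xs)!0) * (?F (map (\<lambda>h. h (m#xs)) AL) - 1) = 0)"
  have ALe: "length ys = k \<Longrightarrow> map (\<lambda>h. h (m#s#ys)) AL = s # m # ys" for m s ys
    by (simp add: AL_def map_drop[of "m#s#ys" "Suc (Suc k)" 2, simplified])
  have Tf_eq: "length ys = k \<Longrightarrow> Tf (s#ys) = mnT s (bev s f) ys" for s ys
  proof -
    assume ys: "length ys = k"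
    have "(\<lambda>m. ((m#s#ys)!1 - (m#s#ys)!0) * (?F (map (\<lambda>h. h (m#s#ys)) AL) - 1) = 0)
       = (\<lambda>m. s \<le> m \<or> (case bev s f (m#ys) of Some (Suc _) \<Rightarrow> False | _ \<Rightarrow> True))"
      by (rule ext) (auto simp: ALe[OF ys] split: option.splits nat.splits)
    then show ?thesis unfolding Tf_def mnT_def by simp
  qed
  define BL where "BL = [(\<lambda>w::nat list. w!0), Tf] @ map (\<lambda>i w. w!i) [1..<Suc k]"
  have BL: "\<forall>h\<in>set BL. recfn (Suc k) h" unfolding BL_def using T Tf_def by (auto intro!: rf_proj)
  have F3: "recfn (Suc k) (\<lambda>w. ?F (map (\<lambda>h. h w) BL))"
    using rf_compL[of BL ?F "Suc k", OF _ BL] F by (simp add: BL_def del: upt_Suc)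
  have "recfn (Suc k) (\<lambda>xs. (1 - (1 - (xs!0 - Tf xs))) * (1 - ((?F (map (\<lambda>h. h xs) BL) - 1) + (1 - ?F (map (\<lambda>h. h xs) BL)))) * Suc (Tf xs))"
    using T unfolding Tf_def[symmetric] by (intro rf_mult rf_minus rf_const rf_proj rf_add rf_suc F3) auto
  then show ?case
  proof (rule rf_cong)
    fix xs :: "nat list" assume "length xs = Suc k"
    then obtain s ys where xs: "xs = s#ys" and ys: "length ys = k" by (cases xs) auto
    have d: "map (\<lambda>g. g xs) (map (\<lambda>i xs. xs!i) [1..<Suc k]) = drop 1 xs" by (rule map_drop) (simp add: xs ys)
    have 1: "map (\<lambda>h. h xs) BL = s # Tf xs # ys"
      unfolding BL_def map_append list.map(1,2) d by (simp add: xs)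
    show "(1 - (1 - (xs!0 - Tf xs))) * (1 - ((?F (map (\<lambda>h. h xs) BL) - 1) + (1 - ?F (map (\<lambda>h. h xs) BL)))) * Suc (Tf xs) = code (bev (hd xs) (Mn f) (tl xs))"
      unfolding 1 using xs
      by (cases "bev s f (mnT s (bev s f) ys # ys)"; cases "the (bev s f (mnT s (bev s f) ys # ys))")
         (auto simp: Tf_eq[OF ys] mnsem_def)
  qed
qed



definition ind :: "recf \<Rightarrow> nat \<Rightarrow> nat \<Rightarrow> nat" where
  "ind f0 s x = (if bev s f0 [x] = None then 0 else 1)"
definition cntf :: "recf \<Rightarrow> nat \<Rightarrow> nat \<Rightarrow> nat" where
  "cntf f0 s m = rec_nat 0 (\<lambda>i r. r + ind f0 s i) m"
definition ef :: "nat \<Rightarrow> nat" where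
  "ef x = rec_nat 1 (\<lambda>x r. r + r * (1 - (r - Suc x))) x"
definition gfun :: "recf \<Rightarrow> nat \<Rightarrow> nat \<Rightarrow> nat \<Rightarrow> nat \<Rightarrow> nat \<Rightarrow> nat" where
  "gfun f0 N p q s x = (1 - (N - x)) * (p * ef x - q * cntf f0 s (ef x))"
definition sig :: "recf \<Rightarrow> nat \<Rightarrow> nat \<Rightarrow> nat \<Rightarrow> nat \<Rightarrow> nat" where
  "sig f0 N p q x = (LEAST s. gfun f0 N p q s x = 0)"

lemma l1: "length xs = 1 \<longleftrightarrow> (\<exists>a. xs = [a])" by (auto simp: length_Suc_conv)
lemma l3: "length xs = 3 \<longleftrightarrow> (\<exists>a b c. xs = [a,b,c])" by (auto simp: length_Suc_conv numeral_3_eq_3)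

lemma R_ind: "recfn 2 (\<lambda>xs. ind f0 (xs!0) (xs!1))"
proof -
  have "recfn (Suc 1) (\<lambda>xs. code (bev (hd xs) f0 (tl xs)))" by (rule rf_bev)
  then have "recfn 2 (\<lambda>xs. code (bev (hd xs) f0 (tl xs)))" by (simp add: numeral_2_eq_2)
  then have "recfn 2 (\<lambda>xs. 1 - (1 - code (bev (hd xs) f0 (tl xs))))" by (intro rf_minus rf_const)
  then show ?thesis by (rule rf_cong) (auto simp: l2 ind_def)
qed

lemma R_cnt: "recfn 2 (\<lambda>xs. cntf f0 (xs!1) (xs!0))"
proof -
  have a: "recfn 1 (\<lambda>xs. 0)" by (rule rf_const)
  have i3: "recfn 3 (\<lambda>w. ind f0 (w!2) (w!1))"
    by (rule rf_cong[OF rf_comp2[OF R_ind rf_proj[of 2 3] rf_proj[of 1 3]]]) auto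
  have b: "recfn (Suc (Suc 1)) (\<lambda>w. w!0 + ind f0 (w!2) (w!1))"
    using rf_add[OF rf_proj[of 0 3] i3] by (simp add: numeral_3_eq_3)
  have "recfn (Suc 1) (\<lambda>xs. cntf f0 (xs!1) (xs!0))"
    by (rule rf_cong[OF rf_prim[OF a b]]) (auto simp: l2[unfolded numeral_2_eq_2] cntf_def)
  then show ?thesis by (simp add: numeral_2_eq_2)
qed

lemma R_e: "recfn 1 (\<lambda>xs. ef (xs!0))"
proof -
  have a: "recfn 0 (\<lambda>xs. 1)" by (rule rf_const)
  have b: "recfn (Suc (Suc 0)) (\<lambda>w. w!0 + w!0 * (1 - (w!0 - Suc (w!1))))"
    by (intro rf_add rf_mult rf_minus rf_const rf_suc rf_proj) auto
  have "recfn (Suc 0) (\<lambda>xs. ef (xs!0))"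
    by (rule rf_cong[OF rf_prim[OF a b]]) (auto simp: length_Suc_conv ef_def)
  then show ?thesis by simp
qed

lemma R_g: "recfn 2 (\<lambda>xs. gfun f0 N p q (xs!0) (xs!1))"
proof -
  have E: "recfn 2 (\<lambda>xs. ef (xs!1))"
    by (rule rf_cong[OF rf_comp1[OF R_e rf_proj[of 1 2]]]) auto
  have C: "recfn 2 (\<lambda>xs. cntf f0 (xs!0) (ef (xs!1)))"
    by (rule rf_cong[OF rf_comp2[OF R_cnt E rf_proj[of 0 2]]]) auto
  have "recfn 2 (\<lambda>xs. (1 - (N - xs!1)) * (p * ef (xs!1) - q * cntf f0 (xs!0) (ef (xs!1))))"
    by (intro rf_mult rf_minus rf_const rf_proj E C) auto
  then show ?thesis by (rule rf_cong) (simp add: gfun_def)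
qed

lemma R_chi:
  assumes ex: "\<And>x. \<exists>s. gfun f0 N p q s x = 0"
  shows "recfn 1 (\<lambda>xs. (1 - (N - xs!0)) * ind f0 (sig f0 N p q (xs!0)) (xs!0))"
proof -
  have g: "recfn (Suc 1) (\<lambda>xs. gfun f0 N p q (xs!0) (xs!1))" using R_g by (simp add: numeral_2_eq_2)
  have S: "recfn 1 (\<lambda>xs. sig f0 N p q (xs!0))"
    by (rule rf_cong[OF rf_mn[OF g]]) (auto simp: l1 sig_def ex)
  have I: "recfn 1 (\<lambda>xs. ind f0 (sig f0 N p q (xs!0)) (xs!0))"
    by (rule rf_cong[OF rf_comp2[OF R_ind S rf_proj[of 0 1]]]) auto
  show ?thesis by (intro rf_mult rf_minus rf_const rf_proj I) auto
qed

lemma ef_inv: "x < ef x \<and> ef x \<le> 2*x+1 \<and> (\<exists>i. ef x = 2^i)"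
proof (induction x)
  case 0 then show ?case by (auto simp: ef_def intro: exI[of _ 0])
next
  case (Suc x)
  have eS: "ef (Suc x) = ef x + ef x * (1 - (ef x - Suc x))" by (simp add: ef_def)
  show ?case
  proof (cases "Suc x < ef x")
    case True
    then have "ef (Suc x) = ef x" using eS by simp
    then show ?thesis using Suc True by auto
  next
    case False
    then have ex: "ef x = Suc x" using Suc by simp
    then have "ef (Suc x) = 2 * Suc x" using eS by simp
    moreover obtain i where "ef x = 2^i" using Suc by blast
    ultimately show ?thesis using ex by (auto intro: exI[of _ "Suc i"])
  qed
qed

lemma ef_block: "2^j \<le> x \<Longrightarrow> x < 2^(Suc j) \<Longrightarrow> ef x = 2^(Suc j)"
proof -
  assume a: "2^j \<le> x" "x < 2^(Suc j)"
  obtain i where i: "ef x = 2^i" using ef_inv by blast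
  have "x < 2^i" "2^i \<le> 2*x+1" using ef_inv[of x] i by auto
  then have "2^j < (2::nat)^i" "(2::nat)^i < 2^(Suc (Suc j))" using a by (linarith, simp)
  note lt = this
  have "j < i" using lt(1) by simp
  moreover have "i < Suc (Suc j)"
  proof (rule ccontr)
    assume "\<not> i < Suc (Suc j)"
    then have "(2::nat)^Suc (Suc j) \<le> 2^i" by (intro power_increasing) auto
    with lt(2) show False by linarith
  qed
  ultimately have "j < i" "i < Suc (Suc j)" by auto
  then have "i = Suc j" by simp
  then show ?thesis using i by simp
qed



lemma cnt_card: "cntf f0 s m = card {x. x < m \<and> bev s f0 [x] \<noteq> None}"
proof (induction m)
  case 0 then show ?case by (simp add: cntf_def)
next
  case (Suc m)
  have e: "{x. x < Suc m \<and> bev s f0 [x] \<noteq> None} = {x. x < m \<and> bev s f0 [x] \<noteq> None} \<union> (if bev s f0 [m] \<noteq> None then {m} else {})"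
    using less_Suc_eq by auto
  have "cntf f0 s (Suc m) = cntf f0 s m + ind f0 s m" by (simp add: cntf_def)
  then show ?case unfolding e using Suc by (auto simp: ind_def)
qed

lemma fuel:
  assumes f0: "\<forall>x. x \<in> A \<longleftrightarrow> (\<exists>y. eval f0 [x] y)"
  shows "\<exists>s. \<forall>x<E. x \<in> A \<longrightarrow> bev s f0 [x] \<noteq> None"
proof (induction E)
  case 0 then show ?case by simp
next
  case (Suc E)
  then obtain s where s: "\<forall>x<E. x \<in> A \<longrightarrow> bev s f0 [x] \<noteq> None" by blast
  show ?case
  proof (cases "E \<in> A")
    case False
    then show ?thesis using s by (metis less_Suc_eq)
  next
    case True
    then obtain y where "eval f0 [E] y" using f0 by blast
    then obtain s' where s': "bev s' f0 [E] = Some y" using bev_complete by blast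
    have "\<forall>x<Suc E. x \<in> A \<longrightarrow> bev (max s s') f0 [x] \<noteq> None"
    proof (intro allI impI)
      fix x assume x: "x < Suc E" "x \<in> A"
      show "bev (max s s') f0 [x] \<noteq> None"
      proof (cases "x = E")
        case True then show ?thesis using bev_mono[OF s'] by simp
      next
        case False
        then obtain z where "bev s f0 [x] = Some z" using s x by fastforce
        then show ?thesis using bev_mono[of s f0 "[x]" z "max s s'"] by simp
      qed
    qed
    then show ?thesis by blast
  qed
qed



lemma main_case:
  fixes A :: "nat set" and d \<epsilon> :: real
  assumes f0: "\<forall>x. x \<in> A \<longleftrightarrow> (\<exists>y. eval f0 [x] y)"
    and lim: "(\<lambda>n. rho_n A (Suc n)) \<longlonglongrightarrow> d" and eps: "\<epsilon> > 0" "\<epsilon> \<le> d"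
  shows "\<exists>B. B \<subseteq> A \<and> computable_set B \<and> D A B < ereal \<epsilon>"
proof -
  define \<delta> where "\<delta> = \<epsilon>/32"
  have \<delta>0: "\<delta> > 0" using eps by (simp add: \<delta>_def)
  obtain N0 where N0: "\<forall>n\<ge>N0. norm (rho_n A (Suc n) - d) < \<delta>" using LIMSEQ_D[OF lim \<delta>0] by blast
  define N where "N = Suc N0"
  define a where "a m = card (A \<inter> {0..<m})" for m
  have aN: "(d - \<delta>) * m \<le> a m \<and> a m \<le> (d + \<delta>) * m" if m: "N \<le> m" for m
  proof -
    obtain n where n: "m = Suc n" "N0 \<le> n" using m unfolding N_def by (cases m) auto
    have "\<bar>a m / m - d\<bar> < \<delta>" using N0 n by (simp add: rho_n_def a_def)
    then have "d - \<delta> < a m / m" "a m / m < d + \<delta>" by auto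
    moreover have mp: "real m > 0" using n by simp
    ultimately show ?thesis by (simp add: field_simps)
  qed
  define q :: nat where "q = nat \<lceil>16/\<epsilon>\<rceil> + 1"
  define p :: nat where "p = nat \<lfloor>(d - \<epsilon>/16) * q\<rfloor>"
  have qbig: "16/\<epsilon> < real q" unfolding q_def by linarith
  have q0: "real q > 0" using qbig eps by (smt (verit) divide_pos_pos)
  have dpos: "(d - \<epsilon>/16) * q \<ge> 0" using eps q0 by simp
  have pq1: "real p \<le> (d - \<epsilon>/16) * q" unfolding p_def using dpos by linarith
  have pq2: "(d - \<epsilon>/16) * q - 1 < real p" unfolding p_def using dpos by linarith
  define r where "r = real p / real q"
  have r1: "r \<le> d - \<epsilon>/16" using pq1 q0 by (simp add: r_def divide_simps)
  have iq: "1 / real q < \<epsilon>/16" using qbig eps q0 by (simp add: field_simps)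
  have r2: "d - \<epsilon>/8 < r"
  proof -
    have "((d - \<epsilon>/16) * q - 1) / q < real p / q" by (rule divide_strict_right_mono[OF pq2 q0])
    moreover have "((d - \<epsilon>/16) * q - 1) / q = (d - \<epsilon>/16) - 1/q" using q0 by (simp add: field_simps)
    ultimately have "(d - \<epsilon>/16) - 1/q < r" by (simp add: r_def)
    then show ?thesis using iq by linarith
  qed
  have pN: "p * m \<le> q * a m" if m: "N \<le> m" for m
  proof -
    have "real p * m = r * q * m" using q0 by (simp add: r_def)
    also have "\<dots> \<le> (d - \<delta>) * q * m" using r1 q0 eps by (intro mult_right_mono) (auto simp: \<delta>_def)
    also have "\<dots> = (d - \<delta>) * m * q" by simp
    also have "\<dots> \<le> real (a m) * real q" using aN[OF m] q0 by (intro mult_right_mono) auto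
    finally have "real (p * m) \<le> real (q * a m)" by (simp add: mult.commute)
    then show ?thesis by linarith
  qed
  have sound: "bev s f0 [x] \<noteq> None \<Longrightarrow> x \<in> A" for s x
    using f0 bev_sound by (metis option.exhaust)
  have cnt_full: "cntf f0 s E = a E" if "\<forall>x<E. x \<in> A \<longrightarrow> bev s f0 [x] \<noteq> None" for s E
  proof -
    have "{x. x < E \<and> bev s f0 [x] \<noteq> None} = A \<inter> {0..<E}" using that sound by auto
    then show ?thesis by (simp add: cnt_card a_def)
  qed
  have exE: "\<exists>s. p * E \<le> q * cntf f0 s E" if "N \<le> E" for E
  proof -
    obtain s where "\<forall>x<E. x \<in> A \<longrightarrow> bev s f0 [x] \<noteq> None" using fuel[OF f0] by blast
    then show ?thesis using cnt_full pN[OF that] by metis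
  qed
  have ex: "\<exists>s. gfun f0 N p q s x = 0" for x
  proof (cases "x < N")
    case True then show ?thesis by (simp add: gfun_def)
  next
    case False
    then have "N \<le> ef x" using ef_inv[of x] by simp
    then obtain s where "p * ef x \<le> q * cntf f0 s (ef x)" using exE by blast
    then show ?thesis by (auto simp: gfun_def)
  qed
  define B where "B = {x. N \<le> x \<and> bev (sig f0 N p q x) f0 [x] \<noteq> None}"
  have BA: "B \<subseteq> A" using sound by (auto simp: B_def)
  have comp: "computable_set B"
  proof -
    obtain F where F: "\<forall>xs. length xs = 1 \<longrightarrow> eval F xs ((1 - (N - xs!0)) * ind f0 (sig f0 N p q (xs!0)) (xs!0))"
      using R_chi[OF ex] unfolding recfn_def by blast
    have "eval F [x] (if x \<in> B then 1 else 0)" for x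
      using F[rule_format, of "[x]"] by (auto simp: B_def ind_def)
    then show ?thesis unfolding computable_set_def by blast
  qed
  define tE where "tE E = (LEAST s. p * E \<le> q * cntf f0 s E)" for E
  have sig_eq: "sig f0 N p q x = tE (ef x)" if "N \<le> x" for x
    unfolding sig_def tE_def gfun_def using that by simp
  have tE_prop: "p * E \<le> q * cntf f0 (tE E) E" if "N \<le> E" for E
    unfolding tE_def by (rule LeastI_ex[OF exE[OF that]])
  define bad where "bad n = card ((A - B) \<inter> {0..<n})" for n
  define \<gamma> where "\<gamma> = d + \<delta> - r"
  have \<gamma>0: "\<gamma> > 0" using r1 \<delta>0 eps by (simp add: \<gamma>_def)
  have \<gamma>1: "\<gamma> < 5*\<epsilon>/32" using r2 by (simp add: \<gamma>_def \<delta>_def)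
  have block: "real (bad (2^Suc j)) \<le> bad (2^j) + \<gamma> * 2^Suc j" if Nj: "N \<le> 2^j" for j
  proof -
    define E :: nat where "E = 2^Suc j"
    define t where "t = tE E"
    have NE: "N \<le> E" using Nj by (simp add: E_def)
    define St where "St = {x. x < E \<and> bev t f0 [x] \<noteq> None}"
    have StA: "St \<subseteq> A \<inter> {0..<E}" using sound by (auto simp: St_def)
    have cSt: "p * E \<le> q * card St" using tE_prop[OF NE] by (simp add: cnt_card St_def t_def)
    have cSt': "r * E \<le> card St"
    proof -
      have "real p * E \<le> real q * card St" using cSt by (metis of_nat_le_iff of_nat_mult)
      then show ?thesis using q0 by (simp add: r_def field_simps)
    qed
    have incl: "(A - B) \<inter> {0..<E} \<subseteq> ((A - B) \<inter> {0..<2^j}) \<union> ((A \<inter> {0..<E}) - St)"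
    proof
      fix x assume x: "x \<in> (A - B) \<inter> {0..<E}"
      show "x \<in> ((A - B) \<inter> {0..<2^j}) \<union> ((A \<inter> {0..<E}) - St)"
      proof (cases "x < 2^j")
        case True then show ?thesis using x by auto
      next
        case False
        then have Nx: "N \<le> x" using Nj by simp
        have "ef x = E" using False x ef_block[of j x] by (simp add: E_def)
        then have "sig f0 N p q x = t" using sig_eq[OF Nx] by (simp add: t_def)
        then have "bev t f0 [x] = None" using x Nx by (auto simp: B_def)
        then show ?thesis using x by (auto simp: St_def)
      qed
    qed
    have "bad E \<le> card (((A - B) \<inter> {0..<2^j}) \<union> ((A \<inter> {0..<E}) - St))"
      unfolding bad_def by (rule card_mono[OF _ incl]) auto
    also have "\<dots> \<le> bad (2^j) + card ((A \<inter> {0..<E}) - St)"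
      unfolding bad_def by (rule card_Un_le)
    also have "card ((A \<inter> {0..<E}) - St) = a E - card St"
      unfolding a_def by (rule card_Diff_subset) (use StA in \<open>auto simp: St_def\<close>)
    finally have "bad E \<le> bad (2^j) + (a E - card St)" .
    moreover have "card St \<le> a E" unfolding a_def by (rule card_mono[OF _ StA]) auto
    ultimately have "real (bad E) \<le> bad (2^j) + (real (a E) - card St)" by linarith
    also have "\<dots> \<le> bad (2^j) + ((d + \<delta>) * E - r * E)" using aN[OF NE] cSt' by linarith
    finally show ?thesis by (simp add: E_def \<gamma>_def algebra_simps)
  qed
  have Npow: "N \<le> 2^(N+i)" for i
  proof -
    have "N < 2^N" by (rule less_exp)
    also have "(2::nat)^N \<le> 2^(N+i)" by (rule power_increasing) auto
    finally show ?thesis by simp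
  qed
  have iter: "real (bad (2^(N+i))) \<le> bad (2^N) + 2 * \<gamma> * 2^(N+i)" for i
  proof (induction i)
    case 0 then show ?case using \<gamma>0 by simp
  next
    case (Suc i)
    have "real (bad (2^(N + Suc i))) = real (bad (2^Suc (N+i)))" by simp
    also have "\<dots> \<le> bad (2^(N+i)) + \<gamma> * 2^Suc (N+i)" by (rule block[OF Npow])
    also have "\<dots> \<le> bad (2^N) + 2 * \<gamma> * 2^(N+i) + \<gamma> * 2^Suc (N+i)" using Suc by simp
    also have "\<dots> = bad (2^N) + 2 * \<gamma> * 2^(N + Suc i)" by (simp add: algebra_simps)
    finally show ?case .
  qed
  define C where "C = real (bad (2^N))"
  have bound: "real (bad n) \<le> C + 4 * \<gamma> * n" if n: "2^N \<le> n" for n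
  proof -
    have "n \<ge> 1" using n by (metis le_trans one_le_power one_le_numeral)
    then obtain k where k: "2^k \<le> n" "n < 2^(k+1)" using ex_power_ivl1[of 2 n] by auto
    have Nk: "N \<le> k"
    proof (rule ccontr)
      assume "\<not> N \<le> k"
      then have "(2::nat)^(k+1) \<le> 2^N" by (intro power_increasing) auto
      then show False using k n by simp
    qed
    then obtain i where i: "k + 1 = N + i" by (metis add_Suc_right le_add_diff_inverse Suc_eq_plus1)
    have "bad n \<le> bad (2^(k+1))" unfolding bad_def using k by (intro card_mono) auto
    then have "real (bad n) \<le> bad (2^(N+i))" unfolding i[symmetric] by simp
    also have "\<dots> \<le> C + 2 * \<gamma> * 2^(N+i)" using iter C_def by simp
    also have "\<dots> = C + 4 * \<gamma> * 2^k" using i[symmetric] by simp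
    also have "\<dots> \<le> C + 4 * \<gamma> * n" using k \<gamma>0 by (simp add: mult_left_mono)
    finally show ?thesis .
  qed
  have C0: "C \<ge> 0" by (simp add: C_def)
  define M where "M = 2^N + nat \<lceil>8 * C / \<epsilon>\<rceil>"
  have ev: "\<forall>n\<ge>M. ereal (rho_n (A - B) (Suc n)) \<le> ereal (3*\<epsilon>/4)"
  proof (intro allI impI)
    fix n assume n: "M \<le> n"
    have n1: "2^N \<le> Suc n" using n by (simp add: M_def)
    have n2: "8 * C / \<epsilon> < real (Suc n)" using n unfolding M_def by linarith
    then have Cn: "C / real (Suc n) < \<epsilon>/8" using eps by (simp add: field_simps)
    have "rho_n (A - B) (Suc n) = bad (Suc n) / real (Suc n)" by (simp add: rho_n_def bad_def)
    also have "\<dots> \<le> (C + 4 * \<gamma> * Suc n) / real (Suc n)"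
      using bound[OF n1] by (intro divide_right_mono) auto
    also have "\<dots> = C / real (Suc n) + 4 * \<gamma>" by (simp add: field_simps)
    also have "\<dots> \<le> 3*\<epsilon>/4" using Cn \<gamma>1 by linarith
    finally show "ereal (rho_n (A - B) (Suc n)) \<le> ereal (3*\<epsilon>/4)" by simp
  qed
  have sd: "(A - B) \<union> (B - A) = A - B" using BA by auto
  have "D A B = upper_density (A - B)" unfolding D_def sd ..
  also have "\<dots> \<le> ereal (3*\<epsilon>/4)" unfolding upper_density_def
    by (rule Limsup_bounded) (use ev in \<open>auto simp: eventually_sequentially\<close>)
  also have "\<dots> < ereal \<epsilon>" using eps by simp
  finally show ?thesis using BA comp by blast
qed



theorem mainTheorem8:
  fixes A :: "nat set" and \<epsilon> :: real
  assumes "ce_set A" and "has_density A" and "\<epsilon> > 0"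
  shows "\<exists>B. B \<subseteq> A \<and> computable_set B \<and> D A B < ereal \<epsilon>"
proof -
  obtain f0 where f0: "\<forall>x. x \<in> A \<longleftrightarrow> (\<exists>y. eval f0 [x] y)" using assms(1) unfolding ce_set_def by blast
  obtain d where lim: "(\<lambda>n. rho_n A (Suc n)) \<longlonglongrightarrow> d"
    using assms(2) unfolding has_density_def convergent_def by blast
  show ?thesis
  proof (cases "\<epsilon> \<le> d")
    case True then show ?thesis using main_case[OF f0 lim assms(3)] by blast
  next
    case False
    have c: "computable_set {}" unfolding computable_set_def
      by (rule exI[of _ Zr]) (auto intro: eval.intros)
    have "D A {} = upper_density A" by (simp add: D_def)
    also have "\<dots> = ereal d" unfolding upper_density_def
      by (rule lim_imp_Limsup) (use lim in auto)
    also have "\<dots> < ereal \<epsilon>" using False by simp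
    finally show ?thesis using c by blast
  qed
qed

end
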